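(* Let $\alpha,\beta\in\mathbb{R}$ with $\alpha\neq 0$, and let $G_1$ be the connected, simply connected Lie group whose Lie algebra $\mathfrak{g}_1$ has a basis $\{e_1,e_2,e_3\}$ with $[e_1,e_2]=\alpha e_1-\beta e_3$, $[e_1,e_3]=-\alpha e_1-\beta e_2$, $[e_2,e_3]=\beta e_1+\alpha e_2+\alpha e_3$, equipped with the left-invariant Lorentzian metric $g$ for which $\{e_1,e_2,e_3\}$ is pseudo-orthonormal with $e_3$ timelike, and with the product structure $J$. Let $\lambda_0,c\in\mathbb{R}$. Then there exists a derivation $D$ of $\mathfrak{g}_1$ with $\widetilde{\mathrm{Ric}}^1=(s^1\lambda_0+c)\mathrm{Id}+D$ (i.e. $(G_1,g,J)$ is an algebraic Schouten soliton associated to the Kobayashi–Nomizu connection $\nabla^1$) if and only if $\beta=0$ and $c=-\frac12\alpha^2+2\alpha^2\lambda_0$.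
   Context: Pseudo-orthonormal means $g(e_1,e_1)=g(e_2,e_2)=1$, $g(e_3,e_3)=-1$, $g(e_i,e_j)=0$ for $i\neq j$; left-invariant tensors are identified with their values on $\mathfrak{g}$. $\nabla$ is the Levi-Civita connection of $g$. The product structure $J$ is the left-invariant endomorphism with $Je_1=e_1$, $Je_2=e_2$, $Je_3=-e_3$. The canonical connection is $\nabla^0_XY=\nabla_XY-\frac12(\nabla_XJ)JY$, and the Kobayashi–Nomizu connection is $\nabla^1_XY=\nabla^0_XY-\frac14[(\nabla_YJ)JX-(\nabla_{JY}J)X]$. For $k=0,1$: $R^k(X,Y)Z=\nabla^k_X\nabla^k_YZ-\nabla^k_Y\nabla^k_XZ-\nabla^k_{[X,Y]}Z$; $\rho^k(X,Y)=-g(R^k(X,e_1)Y,e_1)-g(R^k(X,e_2)Y,e_2)+g(R^k(X,e_3)Y,e_3)$; $\widetilde\rho^k(X,Y)=\frac12(\rho^k(X,Y)+\rho^k(Y,X))$; $\widetilde{\mathrm{Ric}}^k$ is defined by $\widetilde\rho^k(X,Y)=g(\widetilde{\mathrm{Ric}}^k(X),Y)$; and $s^k=\widetilde\rho^k(e_1,e_1)+\widetilde\rho^k(e_2,e_2)-\widetilde\rho^k(e_3,e_3)$. A derivation of $\mathfrak{g}$ is a linear map $D$ with $D[X,Y]=[DX,Y]+[X,DY]$. $(G,g,J)$ is an algebraic Schouten soliton associated to $\nabla^k$ (with real constants $\lambda_0,c$) if $\widetilde{\mathrm{Ric}}^k=(s^k\lambda_0+c)\mathrm{Id}+D$ for some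 derivation $D$. *)

theory Defs
  imports "HOL-Analysis.Analysis"
begin

text \<open>The Lie algebra is modelled as real^3 with basis e1, e2, e3 (the standard
axis vectors, indexed by 1, 2, 3 of the numeral type 3). Left-invariant tensors are
identified with their values on the Lie algebra.\<close>

definition e1 :: "real^3" where "e1 = axis 1 1"
definition e2 :: "real^3" where "e2 = axis 2 1"
definition e3 :: "real^3" where "e3 = axis 3 1"

text \<open>Lie bracket of g_1, extended bilinearly and skew-symmetrically from
[e1,e2] = a e1 - b e3, [e1,e3] = -a e1 - b e2, [e2,e3] = b e1 + a e2 + a e3.\<close>
definition br1 :: "real \<Rightarrow> real \<Rightarrow> real^3 \<Rightarrow> real^3 \<Rightarrow> real^3" where
  "br1 a b x y =
     (x$1 * y$2 - x$2 * y$1) *\<^sub>R (a *\<^sub>R e1 - b *\<^sub>R e3)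
   + (x$1 * y$3 - x$3 * y$1) *\<^sub>R ((- a) *\<^sub>R e1 - b *\<^sub>R e2)
   + (x$2 * y$3 - x$3 * y$2) *\<^sub>R (b *\<^sub>R e1 + a *\<^sub>R e2 + a *\<^sub>R e3)"

definition gL :: "real^3 \<Rightarrow> real^3 \<Rightarrow> real" where
  "gL x y = x$1 * y$1 + x$2 * y$2 - x$3 * y$3"

definition Jp :: "real^3 \<Rightarrow> real^3" where
  "Jp x = x - (2 * x$3) *\<^sub>R e3"

text \<open>Levi-Civita connection of the left-invariant metric (Koszul formula):
2 g(nabla_X Y, Z) = g([X,Y],Z) - g([Y,Z],X) + g([Z,X],Y).\<close>
definition LC :: "(real^3 \<Rightarrow> real^3 \<Rightarrow> real^3) \<Rightarrow> real^3 \<Rightarrow> real^3 \<Rightarrow> real^3" where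
  "LC br X Y = (\<Sum>k\<in>UNIV. (gL (axis k 1) (axis k 1) / 2 *
      (gL (br X Y) (axis k 1) - gL (br Y (axis k 1)) X + gL (br (axis k 1) X) Y))
        *\<^sub>R axis k 1)"

definition nablaJ :: "(real^3 \<Rightarrow> real^3 \<Rightarrow> real^3) \<Rightarrow> real^3 \<Rightarrow> real^3 \<Rightarrow> real^3" where
  "nablaJ br X Y = LC br X (Jp Y) - Jp (LC br X Y)"

definition conn0 :: "(real^3 \<Rightarrow> real^3 \<Rightarrow> real^3) \<Rightarrow> real^3 \<Rightarrow> real^3 \<Rightarrow> real^3" where
  "conn0 br X Y = LC br X Y - (1/2) *\<^sub>R nablaJ br X (Jp Y)"

definition conn1 :: "(real^3 \<Rightarrow> real^3 \<Rightarrow> real^3) \<Rightarrow> real^3 \<Rightarrow> real^3 \<Rightarrow> real^3" where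
  "conn1 br X Y = conn0 br X Y
     - (1/4) *\<^sub>R (nablaJ br Y (Jp X) - nablaJ br (Jp Y) X)"

definition curv :: "(real^3 \<Rightarrow> real^3 \<Rightarrow> real^3) \<Rightarrow> (real^3 \<Rightarrow> real^3 \<Rightarrow> real^3)
    \<Rightarrow> real^3 \<Rightarrow> real^3 \<Rightarrow> real^3 \<Rightarrow> real^3" where
  "curv br nab X Y Z = nab X (nab Y Z) - nab Y (nab X Z) - nab (br X Y) Z"

definition ricci :: "(real^3 \<Rightarrow> real^3 \<Rightarrow> real^3) \<Rightarrow> (real^3 \<Rightarrow> real^3 \<Rightarrow> real^3)
    \<Rightarrow> real^3 \<Rightarrow> real^3 \<Rightarrow> real" where
  "ricci br nab X Y = - gL (curv br nab X e1 Y) e1 - gL (curv br nab X e2 Y) e2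
                      + gL (curv br nab X e3 Y) e3"

definition sym_ricci :: "(real^3 \<Rightarrow> real^3 \<Rightarrow> real^3) \<Rightarrow> (real^3 \<Rightarrow> real^3 \<Rightarrow> real^3)
    \<Rightarrow> real^3 \<Rightarrow> real^3 \<Rightarrow> real" where
  "sym_ricci br nab X Y = (ricci br nab X Y + ricci br nab Y X) / 2"

text \<open>The Ricci operator: the unique endomorphism with
g(Ric X, Y) = sym_ricci(X,Y) (g is nondegenerate).\<close>
definition ricci_op :: "(real^3 \<Rightarrow> real^3 \<Rightarrow> real^3) \<Rightarrow> (real^3 \<Rightarrow> real^3 \<Rightarrow> real^3)
    \<Rightarrow> real^3 \<Rightarrow> real^3" where
  "ricci_op br nab X = (THE R. \<forall>Y. gL R Y = sym_ricci br nab X Y)"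

definition scal :: "(real^3 \<Rightarrow> real^3 \<Rightarrow> real^3) \<Rightarrow> (real^3 \<Rightarrow> real^3 \<Rightarrow> real^3) \<Rightarrow> real" where
  "scal br nab = sym_ricci br nab e1 e1 + sym_ricci br nab e2 e2 - sym_ricci br nab e3 e3"

definition is_derivation :: "(real^3 \<Rightarrow> real^3 \<Rightarrow> real^3) \<Rightarrow> (real^3 \<Rightarrow> real^3) \<Rightarrow> bool" where
  "is_derivation br D \<longleftrightarrow> linear D \<and> (\<forall>X Y. D (br X Y) = br (D X) Y + br X (D Y))"

definition alg_schouten_soliton ::
  "(real^3 \<Rightarrow> real^3 \<Rightarrow> real^3) \<Rightarrow> (real^3 \<Rightarrow> real^3 \<Rightarrow> real^3) \<Rightarrow> real \<Rightarrow> real \<Rightarrow> bool" where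
  "alg_schouten_soliton br nab lam0 c \<longleftrightarrow>
     (\<exists>D. is_derivation br D \<and>
          (\<forall>X. ricci_op br nab X = (scal br nab * lam0 + c) *\<^sub>R X + D X))"

end

theory Submission imports Defs begin
lemma ax: "axis (1::3) (1::real) $ 1 = 1" "axis (1::3) (1::real) $ 2 = 0" "axis (1::3) (1::real) $ 3 = 0"
 "axis (2::3) (1::real) $ 1 = 0" "axis (2::3) (1::real) $ 2 = 1" "axis (2::3) (1::real) $ 3 = 0"
 "axis (3::3) (1::real) $ 1 = 0" "axis (3::3) (1::real) $ 2 = 0" "axis (3::3) (1::real) $ 3 = 1"
  by (simp_all add: axis_def)
lemmas E = e1_def e2_def e3_def ax
lemma br_c: "br1 a b X Y $ 1 = (X$1 * Y$2 - X$2 * Y$1) * a - (X$1 * Y$3 - X$3 * Y$1)*a + (X$2 * Y$3 - X$3 * Y$2)*b"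
 "br1 a b X Y $ 2 = - (X$1 * Y$3 - X$3 * Y$1)*b + (X$2 * Y$3 - X$3 * Y$2)*a"
 "br1 a b X Y $ 3 = - (X$1 * Y$2 - X$2 * Y$1) * b + (X$2 * Y$3 - X$3 * Y$2)*a"
  by (simp_all add: br1_def E algebra_simps)
lemma LC_c: "LC (br1 a b) X Y $ i = (\<Sum>k\<in>UNIV. (gL (axis k 1) (axis k 1) / 2 *
      (gL (br1 a b X Y) (axis k 1) - gL (br1 a b Y (axis k 1)) X + gL (br1 a b (axis k 1) X) Y)) * (axis k 1 $ i))"
  by (simp add: LC_def sum_component)
lemma LC_cc: "LC (br1 a b) X Y $ i = (gL (br1 a b X Y) e1 - gL (br1 a b Y e1) X + gL (br1 a b e1 X) Y)/2 * (e1 $ i)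
  + (gL (br1 a b X Y) e2 - gL (br1 a b Y e2) X + gL (br1 a b e2 X) Y)/2 * (e2 $ i)
  - (gL (br1 a b X Y) e3 - gL (br1 a b Y e3) X + gL (br1 a b e3 X) Y)/2 * (e3 $ i)"
  unfolding LC_c sum_3 by (simp add: gL_def E)
lemma J_c: "Jp X $ 1 = X$1" "Jp X $ 2 = X$2" "Jp X $ 3 = - X$3" by (simp_all add: Jp_def E)
lemmas U = conn1_def conn0_def nablaJ_def LC_cc J_c gL_def br_c E
lemma c1_1: "conn1 (br1 a b) X Y $ 1 = a*X$1*Y$2 + a*X$3*Y$1 - b*X$3*Y$2"
  by (simp add: U field_simps)
lemma c1_2: "conn1 (br1 a b) X Y $ 2 = -a*X$1*Y$1 + b*X$3*Y$1 - a*X$3*Y$2"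
  by (simp add: U field_simps)
lemma c1_3: "conn1 (br1 a b) X Y $ 3 = a*X$2*Y$3"
  by (simp add: U field_simps)

lemma sr: "sym_ricci (br1 a b) (conn1 (br1 a b)) X Y =
   -(a^2+b^2) * (X$1*Y$1 + X$2*Y$2) + a*b*(X$1*Y$2 + X$2*Y$1) - a*b/2*(X$1*Y$3+X$3*Y$1)
   + a^2/2*(X$2*Y$3+X$3*Y$2)"
  by (simp add: sym_ricci_def ricci_def curv_def gL_def c1_1 c1_2 c1_3 br_c E field_simps power2_eq_square)

definition RicV :: "real \<Rightarrow> real \<Rightarrow> real^3 \<Rightarrow> real^3" where
  "RicV a b X = vector [-(a^2+b^2)*X$1 + a*b*X$2 - a*b/2*X$3,
                        a*b*X$1 - (a^2+b^2)*X$2 + a^2/2*X$3,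
                        a*b/2*X$1 - a^2/2*X$2]"
lemma RicV_c: "RicV a b X $ 1 = -(a^2+b^2)*X$1 + a*b*X$2 - a*b/2*X$3"
  "RicV a b X $ 2 = a*b*X$1 - (a^2+b^2)*X$2 + a^2/2*X$3"
  "RicV a b X $ 3 = a*b/2*X$1 - a^2/2*X$2"
  by (simp_all add: RicV_def)

lemma gL_E: "gL R e1 = R$1" "gL R e2 = R$2" "gL R e3 = - R$3"
  by (simp_all add: gL_def E)

lemma ricop: "ricci_op (br1 a b) (conn1 (br1 a b)) X = RicV a b X"
  unfolding ricci_op_def
proof (rule the_equality)
  show "\<forall>Y. gL (RicV a b X) Y = sym_ricci (br1 a b) (conn1 (br1 a b)) X Y"
    by (simp add: sr gL_def RicV_c field_simps power2_eq_square)
next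
  fix R assume h: "\<forall>Y. gL R Y = sym_ricci (br1 a b) (conn1 (br1 a b)) X Y"
  have "gL R e1 = gL (RicV a b X) e1" "gL R e2 = gL (RicV a b X) e2" "gL R e3 = gL (RicV a b X) e3"
    using h[rule_format, of e1] h[rule_format, of e2] h[rule_format, of e3]
    by (simp_all add: sr gL_def RicV_c field_simps power2_eq_square E)
  then show "R = RicV a b X" by (simp add: gL_E vec_eq_iff forall_3)
qed

lemma scal_v: "scal (br1 a b) (conn1 (br1 a b)) = -2*(a^2+b^2)"
  by (simp add: scal_def sr E)

theorem theorem4p3:
  fixes \<alpha> \<beta> lambda0 c :: real
  assumes "\<alpha> \<noteq> 0"
  shows "alg_schouten_soliton (br1 \<alpha> \<beta>) (conn1 (br1 \<alpha> \<beta>)) lambda0 c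
     \<longleftrightarrow> \<beta> = 0 \<and> c = - (1/2) * \<alpha>^2 + 2 * \<alpha>^2 * lambda0"
proof
  assume "alg_schouten_soliton (br1 \<alpha> \<beta>) (conn1 (br1 \<alpha> \<beta>)) lambda0 c"
  then obtain D where dD: "is_derivation (br1 \<alpha> \<beta>) D"
    and hD: "\<forall>X. RicV \<alpha> \<beta> X = (-2*(\<alpha>^2+\<beta>^2) * lambda0 + c) *\<^sub>R X + D X"
    unfolding alg_schouten_soliton_def ricop scal_v by blast
  define k where "k = -2*(\<alpha>^2+\<beta>^2) * lambda0 + c"
  have Dx: "D X = RicV \<alpha> \<beta> X - k *\<^sub>R X" for X using hD k_def by (metis add_diff_cancel_left')
  have der: "D (br1 \<alpha> \<beta> e1 e2) = br1 \<alpha> \<beta> (D e1) e2 + br1 \<alpha> \<beta> e1 (D e2)"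
    using dD unfolding is_derivation_def by blast
  then have "D (br1 \<alpha> \<beta> e1 e2) $ 1 = (br1 \<alpha> \<beta> (D e1) e2 + br1 \<alpha> \<beta> e1 (D e2)) $ 1"
    "D (br1 \<alpha> \<beta> e1 e2) $ 2 = (br1 \<alpha> \<beta> (D e1) e2 + br1 \<alpha> \<beta> e1 (D e2)) $ 2" by simp_all
  then have eq1: "\<alpha> * k + 2*\<alpha>*\<beta>^2 + \<alpha>^3/2 = 0" and eq2: "\<alpha>^2 * \<beta> / 2 = 0"
    unfolding Dx by (simp_all add: br_c RicV_c E field_simps power2_eq_square power3_eq_cube)
  show "\<beta> = 0 \<and> c = - (1/2) * \<alpha>^2 + 2 * \<alpha>^2 * lambda0"
  proof
    show b0: "\<beta> = 0" using eq2 assms by simp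
    have "\<alpha> * (k + \<alpha>^2/2) = 0" using eq1 b0 by (simp add: algebra_simps power3_eq_cube power2_eq_square)
    then have "k = -(\<alpha>^2)/2" using assms by simp
    then show "c = - (1/2) * \<alpha>^2 + 2 * \<alpha>^2 * lambda0" using k_def b0 by simp
  qed
next
  assume h: "\<beta> = 0 \<and> c = - (1/2) * \<alpha>^2 + 2 * \<alpha>^2 * lambda0"
  then have b0: "\<beta> = 0" and c0: "c = - (1/2) * \<alpha>^2 + 2 * \<alpha>^2 * lambda0" by auto
  define D where "D X = RicV \<alpha> \<beta> X - (-(\<alpha>^2)/2) *\<^sub>R X" for X
  have lin: "linear D"
    by (rule linearI) (simp_all add: D_def vec_eq_iff forall_3 RicV_c algebra_simps)
  have "\<forall>X Y. D (br1 \<alpha> \<beta> X Y) = br1 \<alpha> \<beta> (D X) Y + br1 \<alpha> \<beta> X (D Y)"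
    by (simp add: D_def vec_eq_iff forall_3 RicV_c br_c b0 field_simps power2_eq_square)
  then have "is_derivation (br1 \<alpha> \<beta>) D" using lin unfolding is_derivation_def by blast
  moreover have "\<forall>X. ricci_op (br1 \<alpha> \<beta>) (conn1 (br1 \<alpha> \<beta>)) X
     = (scal (br1 \<alpha> \<beta>) (conn1 (br1 \<alpha> \<beta>)) * lambda0 + c) *\<^sub>R X + D X"
    by (simp add: ricop scal_v D_def b0 c0 algebra_simps)
  ultimately show "alg_schouten_soliton (br1 \<alpha> \<beta>) (conn1 (br1 \<alpha> \<beta>)) lambda0 c"
    unfolding alg_schouten_soliton_def by blast
qed

end
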